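(* If $\mathcal{M}=((X,\mathcal{C}_R),\mathcal{V})$ is a quasi-discrete closure model, then for all $x_1,x_2\in X$, $x_1\simeq x_2$ implies $x_1\equiv_{SLCS}x_2$.
   Context: Quasi-discrete closure model: $\mathcal{C}_R(A)=A\cup\{x\mid\exists a\in A.\ aRx\}$, $\vec{\mathcal{C}}(x)=\mathcal{C}_R(\{x\})$, $\overleftarrow{\mathcal{C}}(x)=\mathcal{C}_{R^{-1}}(\{x\})$, $\mathcal{V}:AP\to\mathcal{P}(X)$, $\mathcal{V}^{-1}(x)=\{p\mid x\in\mathcal{V}(p)\}$. A path is a function $\pi:\mathbb{N}\to X$ that is continuous from $(\mathbb{N},\mathcal{C}_{succ})$ (closure based on $n\mapsto n+1$) to $(X,\mathcal{C}_R)$, i.e. $\pi[\mathcal{C}_{succ}(N)]\subseteq\mathcal{C}_R(\pi[N])$ for all $N\subseteq\mathbb{N}$. SLCS formulas: $\Phi::=p\mid\neg\Phi\mid\Phi\lor\Phi\mid\vec\rho\,\Phi_1[\Phi_2]\mid\overleftarrow\rho\,\Phi_1[\Phi_2]$; $x\models\vec\rho\,\Phi_1[\Phi_2]$ iff there are a path $\pi$ and $\ell$ with $\pi(0)=x$, $\pi(\ell)\models\Phi_1$, $\pi(j)\models\Phi_2$ for $0<j<\ell$; $x\models\overleftarrow\rho\,\Phi_1[\Phi_2]$ iff there are a path $\pi$ and $\ell$ with $\pi(\ell)=x$, $\pi(0)\models\Phi_1$, $\pi(j)\models\Phi_2$ for $0<j<\ell$; atoms and Boolean connectives as usual. $\equiv_{SLCS}$: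 satisfying the same SLCS formulas. $\simeq$: union of all non-empty equivalence relations $B$ with $(x_1,x_2)\in B\Rightarrow\mathcal{V}^{-1}(x_1)=\mathcal{V}^{-1}(x_2)$ and for all $C\in X/B$, $\vec{\mathcal{C}}(x_1)\cap C\neq\emptyset\iff\vec{\mathcal{C}}(x_2)\cap C\neq\emptyset$ and $\overleftarrow{\mathcal{C}}(x_1)\cap C\neq\emptyset\iff\overleftarrow{\mathcal{C}}(x_2)\cap C\neq\emptyset$. *)

theory Defs
  imports Main
begin

text \<open>Quasi-discrete closure model over the carrier type 'x, given by a relation R
  and a valuation V of atomic propositions 'ap.\<close>

definition closure_R :: "('x \<times> 'x) set \<Rightarrow> 'x set \<Rightarrow> 'x set" where
  "closure_R R A = A \<union> {x. \<exists>a\<in>A. (a, x) \<in> R}"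

definition fwd_cl :: "('x \<times> 'x) set \<Rightarrow> 'x \<Rightarrow> 'x set" where
  "fwd_cl R x = closure_R R {x}"

definition bwd_cl :: "('x \<times> 'x) set \<Rightarrow> 'x \<Rightarrow> 'x set" where
  "bwd_cl R x = closure_R (R\<inverse>) {x}"

definition val_inv :: "('ap \<Rightarrow> 'x set) \<Rightarrow> 'x \<Rightarrow> 'ap set" where
  "val_inv V x = {p. x \<in> V p}"

definition succ_rel :: "(nat \<times> nat) set" where
  "succ_rel = {(n, Suc n) | n. True}"

definition is_path :: "('x \<times> 'x) set \<Rightarrow> (nat \<Rightarrow> 'x) \<Rightarrow> bool" where
  "is_path R \<pi> \<longleftrightarrow> (\<forall>N. \<pi> ` closure_R succ_rel N \<subseteq> closure_R R (\<pi> ` N))"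

datatype 'ap slcs =
    Atom 'ap
  | Neg "'ap slcs"
  | Disj "'ap slcs" "'ap slcs"
  | RhoF "'ap slcs" "'ap slcs"
  | RhoB "'ap slcs" "'ap slcs"

fun sat :: "('x \<times> 'x) set \<Rightarrow> ('ap \<Rightarrow> 'x set) \<Rightarrow> 'x \<Rightarrow> 'ap slcs \<Rightarrow> bool" where
  "sat R V x (Atom p) \<longleftrightarrow> x \<in> V p"
| "sat R V x (Neg \<Phi>) \<longleftrightarrow> \<not> sat R V x \<Phi>"
| "sat R V x (Disj \<Phi>1 \<Phi>2) \<longleftrightarrow> sat R V x \<Phi>1 \<or> sat R V x \<Phi>2"
| "sat R V x (RhoF \<Phi>1 \<Phi>2) \<longleftrightarrow>
     (\<exists>\<pi> l. is_path R \<pi> \<and> \<pi> 0 = x \<and> sat R V (\<pi> l) \<Phi>1 \<and>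
        (\<forall>j. 0 < j \<and> j < l \<longrightarrow> sat R V (\<pi> j) \<Phi>2))"
| "sat R V x (RhoB \<Phi>1 \<Phi>2) \<longleftrightarrow>
     (\<exists>\<pi> l. is_path R \<pi> \<and> \<pi> l = x \<and> sat R V (\<pi> 0) \<Phi>1 \<and>
        (\<forall>j. 0 < j \<and> j < l \<longrightarrow> sat R V (\<pi> j) \<Phi>2))"

definition slcs_equiv :: "('x \<times> 'x) set \<Rightarrow> ('ap \<Rightarrow> 'x set) \<Rightarrow> 'x \<Rightarrow> 'x \<Rightarrow> bool" where
  "slcs_equiv R V x1 x2 \<longleftrightarrow> (\<forall>\<Phi>. sat R V x1 \<Phi> \<longleftrightarrow> sat R V x2 \<Phi>)"

definition cmm_bisim :: "('x \<times> 'x) set \<Rightarrow> ('ap \<Rightarrow> 'x set) \<Rightarrow> ('x \<times> 'x) set \<Rightarrow> bool" where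
  "cmm_bisim R V B \<longleftrightarrow> B \<noteq> {} \<and> equiv UNIV B \<and>
     (\<forall>(x1, x2)\<in>B. val_inv V x1 = val_inv V x2 \<and>
        (\<forall>C\<in>UNIV // B.
           (fwd_cl R x1 \<inter> C \<noteq> {} \<longleftrightarrow> fwd_cl R x2 \<inter> C \<noteq> {}) \<and>
           (bwd_cl R x1 \<inter> C \<noteq> {} \<longleftrightarrow> bwd_cl R x2 \<inter> C \<noteq> {})))"

definition cmm_bisimilar :: "('x \<times> 'x) set \<Rightarrow> ('ap \<Rightarrow> 'x set) \<Rightarrow> ('x \<times> 'x) set" where
  "cmm_bisimilar R V = \<Union>{B. cmm_bisim R V B}"

end

theory Submission
  imports Defs
begin

lemma path_char: "is_path R \<pi> \<longleftrightarrow> (\<forall>n. \<pi> (Suc n) \<in> fwd_cl R (\<pi> n))"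
proof
  assume "is_path R \<pi>"
  then have h: "\<And>N. \<pi> ` closure_R succ_rel N \<subseteq> closure_R R (\<pi> ` N)" unfolding is_path_def by blast
  show "\<forall>n. \<pi> (Suc n) \<in> fwd_cl R (\<pi> n)"
  proof
    fix n
    have "Suc n \<in> closure_R succ_rel {n}" unfolding closure_R_def succ_rel_def by auto
    then have "\<pi> (Suc n) \<in> closure_R R (\<pi> ` {n})" using h[of "{n}"] by blast
    then show "\<pi> (Suc n) \<in> fwd_cl R (\<pi> n)" unfolding fwd_cl_def by simp
  qed
next
  assume a: "\<forall>n. \<pi> (Suc n) \<in> fwd_cl R (\<pi> n)"
  show "is_path R \<pi>" unfolding is_path_def
  proof (intro allI subsetI)
    fix N z assume "z \<in> \<pi> ` closure_R succ_rel N"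
    then obtain m where m: "m \<in> closure_R succ_rel N" "z = \<pi> m" by blast
    show "z \<in> closure_R R (\<pi> ` N)"
    proof (cases "m \<in> N")
      case True then show ?thesis using m unfolding closure_R_def by auto
    next
      case False
      then obtain n where n: "n \<in> N" "m = Suc n" using m unfolding closure_R_def succ_rel_def by auto
      have "\<pi> m \<in> closure_R R {\<pi> n}" using a n unfolding fwd_cl_def by simp
      then show ?thesis using n m unfolding closure_R_def by auto
    qed
  qed
qed

lemma mem_bwd: "b \<in> bwd_cl R a \<longleftrightarrow> a \<in> fwd_cl R b"
  unfolding bwd_cl_def fwd_cl_def closure_R_def by auto

lemma step_fwd:
  assumes B: "cmm_bisim R V B" and ab: "(a, b) \<in> B" and a': "a' \<in> fwd_cl R a"
  shows "\<exists>b'\<in>fwd_cl R b. (a', b') \<in> B"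
proof -
  have eq: "equiv UNIV B" using B unfolding cmm_bisim_def by blast
  let ?C = "B `` {a'}"
  have C: "?C \<in> UNIV // B" unfolding quotient_def by blast
  have "a' \<in> ?C" using eq unfolding equiv_def refl_on_def by blast
  then have "fwd_cl R a \<inter> ?C \<noteq> {}" using a' by blast
  then have "fwd_cl R b \<inter> ?C \<noteq> {}" using B ab C unfolding cmm_bisim_def by fast
  then show ?thesis by blast
qed

lemma step_bwd:
  assumes B: "cmm_bisim R V B" and ab: "(a, b) \<in> B" and a': "a' \<in> bwd_cl R a"
  shows "\<exists>b'\<in>bwd_cl R b. (a', b') \<in> B"
proof -
  have eq: "equiv UNIV B" using B unfolding cmm_bisim_def by blast
  let ?C = "B `` {a'}"
  have C: "?C \<in> UNIV // B" unfolding quotient_def by blast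
  have "a' \<in> ?C" using eq unfolding equiv_def refl_on_def by blast
  then have "bwd_cl R a \<inter> ?C \<noteq> {}" using a' by blast
  then have "bwd_cl R b \<inter> ?C \<noteq> {}" using B ab C unfolding cmm_bisim_def by fast
  then show ?thesis by blast
qed

lemma self_fwd: "x \<in> fwd_cl R x" unfolding fwd_cl_def closure_R_def by auto

lemma main:
  assumes B: "cmm_bisim R V B"
  shows "\<forall>x y. (x, y) \<in> B \<longrightarrow> (sat R V x \<Phi> \<longrightarrow> sat R V y \<Phi>)"
proof -
  have eq: "equiv UNIV B" using B unfolding cmm_bisim_def by blast
  have symB: "\<And>x y. (x, y) \<in> B \<Longrightarrow> (y, x) \<in> B" using eq unfolding equiv_def sym_def by blast
  show ?thesis
  proof (induction \<Phi>)
    case (Atom p)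
    then show ?case using B unfolding cmm_bisim_def val_inv_def by fastforce
  next
    case (Neg \<Phi>)
    then show ?case using symB by auto
  next
    case (Disj \<Phi>1 \<Phi>2)
    then show ?case by auto
  next
    case (RhoF \<Phi>1 \<Phi>2)
    show ?case
    proof (intro allI impI)
      fix x y assume xy: "(x, y) \<in> B" and s: "sat R V x (RhoF \<Phi>1 \<Phi>2)"
      then obtain \<pi> l where p: "is_path R \<pi>" "\<pi> 0 = x" "sat R V (\<pi> l) \<Phi>1"
        "\<forall>j. 0 < j \<and> j < l \<longrightarrow> sat R V (\<pi> j) \<Phi>2" by auto
      have pc: "\<And>n. \<pi> (Suc n) \<in> fwd_cl R (\<pi> n)" using p(1) path_char by blast
      define \<pi>' where "\<pi>' = rec_nat y (\<lambda>n z. SOME z'. z' \<in> fwd_cl R z \<and> (\<pi> (Suc n), z') \<in> B)"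
      have rel: "(\<pi> n, \<pi>' n) \<in> B \<and> (n > 0 \<longrightarrow> \<pi>' n \<in> fwd_cl R (\<pi>' (n - 1)))" for n
      proof (induction n)
        case 0 then show ?case using xy p(2) unfolding \<pi>'_def by simp
      next
        case (Suc n)
        have "\<exists>z'. z' \<in> fwd_cl R (\<pi>' n) \<and> (\<pi> (Suc n), z') \<in> B"
          using step_fwd[OF B _ pc[of n]] Suc by blast
        then have "\<pi>' (Suc n) \<in> fwd_cl R (\<pi>' n) \<and> (\<pi> (Suc n), \<pi>' (Suc n)) \<in> B"
          unfolding \<pi>'_def by simp (rule someI_ex)
        then show ?case by simp
      qed
      have "is_path R \<pi>'" unfolding path_char using rel by (metis diff_Suc_1 zero_less_Suc)
      moreover have "\<pi>' 0 = y" unfolding \<pi>'_def by simp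
      moreover have "sat R V (\<pi>' l) \<Phi>1" using RhoF.IH(1) rel p(3) by blast
      moreover have "\<forall>j. 0 < j \<and> j < l \<longrightarrow> sat R V (\<pi>' j) \<Phi>2" using RhoF.IH(2) rel p(4) by blast
      ultimately show "sat R V y (RhoF \<Phi>1 \<Phi>2)" by auto
    qed
  next
    case (RhoB \<Phi>1 \<Phi>2)
    show ?case
    proof (intro allI impI)
      fix x y assume xy: "(x, y) \<in> B" and s: "sat R V x (RhoB \<Phi>1 \<Phi>2)"
      then obtain \<pi> l where p: "is_path R \<pi>" "\<pi> l = x" "sat R V (\<pi> 0) \<Phi>1"
        "\<forall>j. 0 < j \<and> j < l \<longrightarrow> sat R V (\<pi> j) \<Phi>2" by auto
      have pc: "\<And>n. \<pi> (Suc n) \<in> fwd_cl R (\<pi> n)" using p(1) path_char by blast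
      define \<sigma> where "\<sigma> = rec_nat y (\<lambda>k z. SOME z'. z' \<in> bwd_cl R z \<and> (\<pi> (l - Suc k), z') \<in> B)"
      have rel: "k \<le> l \<Longrightarrow> (\<pi> (l - k), \<sigma> k) \<in> B \<and> (k > 0 \<longrightarrow> \<sigma> (k - 1) \<in> fwd_cl R (\<sigma> k))" for k
      proof (induction k)
        case 0 then show ?case using xy p(2) unfolding \<sigma>_def by simp
      next
        case (Suc k)
        have e: "l - k = Suc (l - Suc k)" using Suc.prems by simp
        have "\<pi> (l - Suc k) \<in> bwd_cl R (\<pi> (l - k))" unfolding mem_bwd e by (rule pc)
        then have "\<exists>z'. z' \<in> bwd_cl R (\<sigma> k) \<and> (\<pi> (l - Suc k), z') \<in> B"
          using step_bwd[OF B] Suc by (meson Suc_leD)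
        then have "\<sigma> (Suc k) \<in> bwd_cl R (\<sigma> k) \<and> (\<pi> (l - Suc k), \<sigma> (Suc k)) \<in> B"
          unfolding \<sigma>_def by simp (rule someI_ex)
        then show ?case by (simp add: mem_bwd)
      qed
      define \<pi>' where "\<pi>' = (\<lambda>j. if j \<le> l then \<sigma> (l - j) else y)"
      have "\<pi>' (Suc n) \<in> fwd_cl R (\<pi>' n)" for n
      proof (cases "Suc n \<le> l")
        case True
        have "\<sigma> (l - Suc n) \<in> fwd_cl R (\<sigma> (l - n))"
          using rel[of "l - n"] True by (simp add: Suc_diff_Suc)
        then show ?thesis using True unfolding \<pi>'_def by simp
      next
        case False
        then have "n \<ge> l" by simp
        then show ?thesis unfolding \<pi>'_def using self_fwd[of y R]
          by (cases "n = l") (auto simp: \<sigma>_def)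
      qed
      then have "is_path R \<pi>'" unfolding path_char by blast
      moreover have "\<pi>' l = y" unfolding \<pi>'_def \<sigma>_def by simp
      moreover have "sat R V (\<pi>' 0) \<Phi>1"
      proof -
        have "(\<pi> 0, \<sigma> l) \<in> B" using rel[of l] by simp
        moreover have "\<pi>' 0 = \<sigma> l" unfolding \<pi>'_def by simp
        ultimately show ?thesis using RhoB.IH(1) p(3) by metis
      qed
      moreover have "\<forall>j. 0 < j \<and> j < l \<longrightarrow> sat R V (\<pi>' j) \<Phi>2"
      proof (intro allI impI)
        fix j assume j: "0 < j \<and> j < l"
        have "(\<pi> j, \<sigma> (l - j)) \<in> B" using rel[of "l - j"] j by simp
        moreover have "\<pi>' j = \<sigma> (l - j)" unfolding \<pi>'_def using j by simp
        ultimately show "sat R V (\<pi>' j) \<Phi>2" using RhoB.IH(2) p(4) j by metis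
      qed
      ultimately show "sat R V y (RhoB \<Phi>1 \<Phi>2)" by auto
    qed
  qed
qed

theorem lemma5:
  fixes R :: "('x \<times> 'x) set" and V :: "'ap \<Rightarrow> 'x set" and x1 x2 :: 'x
  assumes "(x1, x2) \<in> cmm_bisimilar R V"
  shows "slcs_equiv R V x1 x2"
proof -
  obtain B where B: "cmm_bisim R V B" "(x1, x2) \<in> B" using assms unfolding cmm_bisimilar_def by blast
  have "(x2, x1) \<in> B" using B unfolding cmm_bisim_def equiv_def sym_def by blast
  then show ?thesis unfolding slcs_equiv_def using main[OF B(1)] B(2) by blast
qed

end
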